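(* Let $\lambda>0$, let $K\ge1$ be an integer, and let $1+\frac{1}{1+2K}\le\bar E^{max}\le2$. Set $\pi_0^*=\bar E^{max}-1$ and $k^*=\lfloor(\frac{1}{\pi_0^*}-1)/2\rfloor$. Assume $k^*+1\le K$ and $\rho^*_{k^*+1}:=\frac{1}{\pi_0^*}-1-2k^*>0$. Define the rates $$\lambda_k^*=\begin{cases}2\lambda & k=0,\\ \lambda & 1\le k\le k^*,\\ 0 & k^*+1\le k\le K,\end{cases}\qquad \mu_k^*=\begin{cases}\lambda & k\ne k^*+1,\\ \dfrac{2\lambda}{\rho^*_{k^*+1}} & k=k^*+1.\end{cases}$$ Equivalently, define the ENC parameters $$g_k^*=\begin{cases}0 & k\le k^*,\\ 1 & k^*+1\le k\le K,\end{cases}\qquad f_k^*=\begin{cases}\dfrac{2\lambda}{\rho^*_{k^*+1}}-\lambda & k=k^*+1,\\ 0 & k\ne k^*+1.\end{cases}$$ Then these rates are feasible for Problem 1 (in particular $\mu_k^*\ge\lambda$ and $\lambda_K^*=0$), the resulting stationary distribution satisfies $\pi_0=\pi_0^*$, and the average delay $$D=\frac{1}{2\lambda}\sum_k k\pi_k$$ equals the optimal value $$\frac{k^*+1}{2\lambda}\bigl[1-(\bar E^{max}-1)(k^*+1)\bigr].$$ Hence these parameters are optimal for Problem 1.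
   Context: ENC parameters are $g_0,\dots,g_K\in[0,1]$ and $f_1,\dots,f_K\ge0$. They determine the rates $$\lambda_0=2\lambda(1-g_0),\qquad \lambda_k=\lambda(1-g_k)\ (1\le k\le K),\qquad \mu_k=\lambda+f_k\ (1\le k\le K).$$ The buffer is the birth–death chain on $\{0,\dots,K\}$ with birth rates $\lambda_k$ and death rates $\mu_k$. Its stationary distribution is $$\pi_k=\pi_0\prod_{m=0}^{k-1}\frac{\lambda_m}{\mu_{m+1}},\qquad \pi_0=\Bigl[1+\sum_{k=1}^{K}\prod_{m=0}^{k-1}\frac{\lambda_m}{\mu_{m+1}}\Bigr]^{-1}.$$ Problem 1 is the following: minimize $D=\frac{1}{2\lambda}\sum_{k=0}^K k\pi_k$ over rates satisfying $0\le\lambda_0\le2\lambda$, $0\le\lambda_k\le\lambda$ for $1\le k\le K-1$, $\lambda_K=0$, and $\mu_k\ge\lambda$, subject to $\pi_0+1\le\bar E^{max}$. *)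

theory Defs
  imports Complex_Main
begin

text \<open>Birth-death buffer chain on states 0..K with birth rates lam k and death rates mu k.\<close>

definition ratio_prod :: "(nat \<Rightarrow> real) \<Rightarrow> (nat \<Rightarrow> real) \<Rightarrow> nat \<Rightarrow> real" where
  "ratio_prod lam mu k = (\<Prod>m<k. lam m / mu (m + 1))"

definition stat_pi0 :: "nat \<Rightarrow> (nat \<Rightarrow> real) \<Rightarrow> (nat \<Rightarrow> real) \<Rightarrow> real" where
  "stat_pi0 K lam mu = 1 / (1 + (\<Sum>k\<in>{1..K}. ratio_prod lam mu k))"

definition stat_pi :: "nat \<Rightarrow> (nat \<Rightarrow> real) \<Rightarrow> (nat \<Rightarrow> real) \<Rightarrow> nat \<Rightarrow> real" where
  "stat_pi K lam mu k = stat_pi0 K lam mu * ratio_prod lam mu k"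

definition avg_delay :: "real \<Rightarrow> nat \<Rightarrow> (nat \<Rightarrow> real) \<Rightarrow> (nat \<Rightarrow> real) \<Rightarrow> real" where
  "avg_delay l K lam mu = 1 / (2 * l) * (\<Sum>k\<le>K. real k * stat_pi K lam mu k)"

definition feasible1 :: "real \<Rightarrow> nat \<Rightarrow> real \<Rightarrow> (nat \<Rightarrow> real) \<Rightarrow> (nat \<Rightarrow> real) \<Rightarrow> bool" where
  "feasible1 l K Emax lam mu \<longleftrightarrow>
     0 \<le> lam 0 \<and> lam 0 \<le> 2 * l \<and>
     (\<forall>k\<in>{1..K-1}. 0 \<le> lam k \<and> lam k \<le> l) \<and>
     lam K = 0 \<and>
     (\<forall>k\<in>{1..K}. mu k \<ge> l) \<and>
     stat_pi0 K lam mu + 1 \<le> Emax"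

definition enc_lam :: "real \<Rightarrow> (nat \<Rightarrow> real) \<Rightarrow> nat \<Rightarrow> real" where
  "enc_lam l g k = (if k = 0 then 2 * l * (1 - g 0) else l * (1 - g k))"

definition enc_mu :: "real \<Rightarrow> (nat \<Rightarrow> real) \<Rightarrow> nat \<Rightarrow> real" where
  "enc_mu l f k = l + f k"

end

theory Submission
  imports Defs
begin

lemma rp_Suc: "ratio_prod lam mu (Suc k) = ratio_prod lam mu k * (lam k / mu (k + 1))"
  unfolding ratio_prod_def by (simp add: prod.lessThan_Suc)

lemma rp_bounds:
  assumes l: "l > 0" and F: "feasible1 l K Emax lam mu"
  shows "1 \<le> k \<Longrightarrow> k \<le> K \<Longrightarrow> 0 \<le> ratio_prod lam mu k \<and> ratio_prod lam mu k \<le> 2"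
proof (induction k)
  case 0 then show ?case by simp
next
  case (Suc k)
  show ?case
  proof (cases "k = 0")
    case True
    have m: "mu 1 \<ge> l" using F Suc.prems unfolding feasible1_def by auto
    have a: "0 \<le> lam 0" "lam 0 \<le> 2 * l" using F unfolding feasible1_def by auto
    have "lam 0 / mu 1 \<le> 2 * l / l"
      using m a l by (intro frac_le) auto
    then have "lam 0 / mu 1 \<le> 2" using l by simp
    moreover have "0 \<le> lam 0 / mu 1" using a m l by simp
    ultimately show ?thesis using True by (simp add: rp_Suc ratio_prod_def)
  next
    case False
    have IH: "0 \<le> ratio_prod lam mu k \<and> ratio_prod lam mu k \<le> 2" using Suc False by simp
    have "k \<in> {1..K-1}" using False Suc.prems by auto
    then have a: "0 \<le> lam k" "lam k \<le> l" using F unfolding feasible1_def by auto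
    have m: "mu (k+1) \<ge> l" using F Suc.prems unfolding feasible1_def by auto
    have q0: "0 \<le> lam k / mu (k+1)" using a m l by simp
    have q1: "lam k / mu (k+1) \<le> 1" using a m l by simp
    have "ratio_prod lam mu k * (lam k / mu (k + 1)) \<le> 2 * 1"
      using IH q0 q1 by (intro mult_mono) auto
    moreover have "0 \<le> ratio_prod lam mu k * (lam k / mu (k + 1))" using IH q0 mult_nonneg_nonneg by blast
    ultimately show ?thesis using rp_Suc[of lam mu k] by simp
  qed
qed

lemma gauss2: "(\<Sum>k\<in>{1..n}. 2 * real k) = real n * (real n + 1)"
  by (induction n) (auto simp: algebra_simps sum.cl_ivl_Suc)

lemma sum_restrict_le:
  assumes "n \<le> (K::nat)"
  shows "(\<Sum>k\<in>{1..K}. if k \<le> n then f k else 0) = (\<Sum>k\<in>{1..n}. (f k :: real))"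
proof -
  have "(\<Sum>k\<in>{1..K}. if k \<le> n then f k else 0) = sum f {k\<in>{1..K}. k \<le> n}"
    by (rule sum.inter_filter[symmetric]) (rule finite_atLeastAtMost)
  also have "{k\<in>{1..K}. k \<le> n} = {1..n}" using assms by auto
  finally show ?thesis .
qed

lemma lowsum:
  assumes n: "n \<le> K" and r: "\<And>k. k \<in> {1..K} \<Longrightarrow> 0 \<le> r k \<and> r k \<le> (2::real)"
  shows "(\<Sum>k\<in>{1..K}. (real k - (real n + 1)) * r k) \<ge> - (real n * (real n + 1))"
proof -
  have "(\<Sum>k\<in>{1..K}. (real k - (real n + 1)) * r k) \<ge>
        (\<Sum>k\<in>{1..K}. if k \<le> n then 2 * (real k - real n - 1) else 0)"
  proof (rule sum_mono)
    fix k assume k: "k \<in> {1..K}"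
    show "(if k \<le> n then 2 * (real k - real n - 1) else 0) \<le> (real k - (real n + 1)) * r k"
    proof (cases "k \<le> n")
      case True
      have "(real k - (real n + 1)) * 2 \<le> (real k - (real n + 1)) * r k"
        using r[OF k] True by (intro mult_left_mono_neg) auto
      then show ?thesis using True by (simp add: algebra_simps)
    next
      case False
      then show ?thesis using r[OF k] by simp
    qed
  qed
  also have "(\<Sum>k\<in>{1..K}. if k \<le> n then 2 * (real k - real n - 1) else 0)
     = (\<Sum>k\<in>{1..n}. 2 * (real k - real n - 1))" using sum_restrict_le[OF n] .
  also have "\<dots> = (\<Sum>k\<in>{1..n}. 2 * real k - 2 * (real n + 1))"
    by (simp add: algebra_simps)
  also have "\<dots> = (\<Sum>k\<in>{1..n}. 2 * real k) - (\<Sum>k\<in>{1..n}. 2 * (real n + 1))"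
    by (rule sum_subtractf)
  also have "\<dots> = - (real n * (real n + 1))" by (simp only: gauss2) (simp add: algebra_simps)
  finally show ?thesis .
qed

lemma avg_form:
  "avg_delay l K lam mu = 1 / (2 * l) * stat_pi0 K lam mu * (\<Sum>k\<in>{1..K}. real k * ratio_prod lam mu k)"
proof -
  have e: "{..K} = insert 0 {1..K}" by auto
  show ?thesis unfolding avg_delay_def stat_pi_def e
    by (simp add: sum_distrib_left algebra_simps)
qed

lemma opt_bound:
  assumes l: "l > 0" and F: "feasible1 l K Emax lam mu" and n: "n \<le> K"
    and p: "p = Emax - 1"
  shows "avg_delay l K lam mu \<ge> (real n + 1) / (2 * l) * (1 - p * (real n + 1))"
proof -
  define r where "r = ratio_prod lam mu"
  define S where "S = (\<Sum>k\<in>{1..K}. r k)"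
  define T where "T = (\<Sum>k\<in>{1..K}. real k * r k)"
  have rb: "\<And>k. k \<in> {1..K} \<Longrightarrow> 0 \<le> r k \<and> r k \<le> 2"
    using rp_bounds[OF l F] unfolding r_def by auto
  have S0: "S \<ge> 0" unfolding S_def using rb by (intro sum_nonneg) auto
  have P: "stat_pi0 K lam mu = 1 / (1 + S)" unfolding stat_pi0_def S_def r_def by simp
  have Pp: "1 / (1 + S) \<le> p" using F P p unfolding feasible1_def by auto
  have pS: "1 \<le> p * (1 + S)" using Pp S0 by (simp add: field_simps)
  have lb: "(\<Sum>k\<in>{1..K}. (real k - (real n + 1)) * r k) = T - (real n + 1) * S"
    unfolding T_def S_def by (simp add: algebra_simps sum_subtractf sum_distrib_left)
  have TS: "T \<ge> (real n + 1) * S - real n * (real n + 1)"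
  proof -
    have "(\<Sum>k\<in>{1..K}. (real k - (real n + 1)) * r k) \<ge> - (real n * (real n + 1))"
      by (rule lowsum[OF n]) (use rb in auto)
    then show ?thesis using lb by linarith
  qed
  have key: "T \<ge> (real n + 1) * (1 - p * (real n + 1)) * (1 + S)"
  proof -
    have "(real n + 1) * (1 - p * (real n + 1)) * (1 + S)
        = (real n + 1) * (1 + S) - (real n + 1) * (real n + 1) * (p * (1 + S))"
      by (simp add: algebra_simps)
    also have "\<dots> \<le> (real n + 1) * (1 + S) - (real n + 1) * (real n + 1) * 1"
      using pS by (intro diff_left_mono mult_left_mono) auto
    also have "\<dots> = (real n + 1) * S - real n * (real n + 1)" by (simp add: algebra_simps)
    finally show ?thesis using TS by linarith
  qed
  have "(real n + 1) * (1 - p * (real n + 1)) \<le> T / (1 + S)"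
    using key S0 by (simp add: field_simps)
  then have "(real n + 1) * (1 - p * (real n + 1)) / (2 * l) \<le> T / (1 + S) / (2 * l)"
    by (rule divide_right_mono) (use l in auto)
  moreover have "avg_delay l K lam mu = T / (1 + S) / (2 * l)"
    unfolding avg_form P T_def r_def by simp
  ultimately show ?thesis by simp
qed

theorem mainTheorem5:
  fixes l Emax pstar rho :: real and K kstar :: nat
    and lamS muS gS fS :: "nat \<Rightarrow> real"
  assumes l_pos: "l > 0"
    and K_ge: "K \<ge> 1"
    and E_lo: "1 + 1 / (1 + 2 * real K) \<le> Emax" and E_hi: "Emax \<le> 2"
    and pstar_def: "pstar = Emax - 1"
    and kstar_def: "kstar = nat \<lfloor>(1 / pstar - 1) / 2\<rfloor>"
    and kstar_K: "kstar + 1 \<le> K"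
    and rho_def: "rho = 1 / pstar - 1 - 2 * real kstar"
    and rho_pos: "rho > 0"
    and lamS_def: "\<And>k. lamS k = (if k = 0 then 2 * l else if k \<le> kstar then l else 0)"
    and muS_def: "\<And>k. muS k = (if k = kstar + 1 then 2 * l / rho else l)"
    and gS_def: "\<And>k. gS k = (if k \<le> kstar then 0 else 1)"
    and fS_def: "\<And>k. fS k = (if k = kstar + 1 then 2 * l / rho - l else 0)"
  shows "(\<forall>k\<le>K. 0 \<le> gS k \<and> gS k \<le> 1) \<and> (\<forall>k\<in>{1..K}. fS k \<ge> 0)
       \<and> (\<forall>k\<le>K. enc_lam l gS k = lamS k) \<and> (\<forall>k\<in>{1..K}. enc_mu l fS k = muS k)
       \<and> feasible1 l K Emax lamS muS
       \<and> (\<forall>k\<in>{1..K}. muS k \<ge> l) \<and> lamS K = 0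
       \<and> stat_pi0 K lamS muS = pstar
       \<and> avg_delay l K lamS muS
           = (real kstar + 1) / (2 * l) * (1 - (Emax - 1) * (real kstar + 1))
       \<and> (\<forall>lam mu. feasible1 l K Emax lam mu \<longrightarrow> avg_delay l K lamS muS \<le> avg_delay l K lam mu)"
proof -
  define n where "n = kstar"
  define p where "p = pstar"
  have p_pos: "p > 0"
  proof -
    have "1 / (1 + 2 * real K) > 0" by simp
    then show ?thesis using E_lo pstar_def p_def by linarith
  qed
  have p_le: "p \<le> 1" using E_hi pstar_def p_def by simp
  have x0: "(1 / p - 1) / 2 \<ge> 0" using p_pos p_le by (simp add: field_simps)
  have nfl: "real n = of_int \<lfloor>(1 / p - 1) / 2\<rfloor>"
    using kstar_def n_def p_def x0 by simp
  have "of_int \<lfloor>(1 / p - 1) / 2\<rfloor> > (1 / p - 1) / 2 - 1" by linarith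
  then have "real n > (1 / p - 1) / 2 - 1" using nfl by simp
  moreover have "rho = 1 / p - 1 - 2 * real n" using rho_def n_def p_def by simp
  moreover have "\<And>x. (x - 1) / 2 - 1 < real n \<Longrightarrow> rho = x - 1 - 2 * real n \<Longrightarrow> rho < 2"
    by (simp add: field_simps)
  ultimately have rho2: "rho < 2" by blast
  have mubig: "2 * l / rho \<ge> l"
  proof -
    have "l * rho \<le> 2 * l" using rho2 l_pos by simp
    then show ?thesis using rho_pos by (simp add: field_simps)
  qed
  have rho_eq: "1 + 2 * real n + rho = 1 / p" using rho_def n_def p_def by simp
  define R where "R k = (if k = 0 then 1 else if k \<le> n then 2 else if k = n + 1 then rho else (0::real))" for k
  have RP: "ratio_prod lamS muS k = R k" for k
  proof (induction k)
    case 0 then show ?case by (simp add: R_def ratio_prod_def)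
  next
    case (Suc k)
    have "ratio_prod lamS muS (Suc k) = R k * (lamS k / muS (k + 1))"
      using Suc by (simp add: rp_Suc)
    also have "\<dots> = R (Suc k)"
    proof -
      consider "k = 0" "n = 0" | "k = 0" "n > 0" | "0 < k" "k < n" | "0 < k" "k = n"
        | "k = n + 1" | "k > n + 1" by linarith
      then show ?thesis
      proof cases
        case 1 then show ?thesis using l_pos rho_pos
          by (simp add: R_def lamS_def muS_def n_def)
      next
        case 2 then show ?thesis using l_pos by (simp add: R_def lamS_def muS_def n_def)
      next
        case 3 then show ?thesis using l_pos by (simp add: R_def lamS_def muS_def n_def)
      next
        case 4 then show ?thesis using l_pos rho_pos by (simp add: R_def lamS_def muS_def n_def)
      next
        case 5 then show ?thesis by (simp add: R_def lamS_def muS_def n_def)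
      next
        case 6 then show ?thesis by (simp add: R_def lamS_def muS_def n_def)
      qed
    qed
    finally show ?case .
  qed
  have nK: "n + 1 \<le> K" using kstar_K n_def by simp
  have Rsplit: "k \<in> {1..K} \<Longrightarrow> R k = (if k \<le> n then 2 else 0) + (if k = n + 1 then rho else 0)" for k
    by (auto simp: R_def)
  have Ssum: "(\<Sum>k\<in>{1..K}. ratio_prod lamS muS k) = 2 * real n + rho"
  proof -
    have "(\<Sum>k\<in>{1..K}. ratio_prod lamS muS k)
        = (\<Sum>k\<in>{1..K}. (if k \<le> n then 2 else 0) + (if k = n + 1 then rho else 0))"
      using Rsplit by (simp add: RP)
    also have "\<dots> = (\<Sum>k\<in>{1..K}. if k \<le> n then 2 else 0) + (\<Sum>k\<in>{1..K}. if k = n + 1 then rho else 0)"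
      by (simp add: sum.distrib)
    also have "(\<Sum>k\<in>{1..K}. if k \<le> n then 2 else 0) = (\<Sum>k\<in>{1..n}. (2::real))"
      using sum_restrict_le[of n K "\<lambda>_. 2"] nK by simp
    also have "(\<Sum>k\<in>{1..K}. if k = n + 1 then rho else 0) = rho"
      using nK by (simp add: sum.delta)
    finally show ?thesis by simp
  qed
  have Tsum: "(\<Sum>k\<in>{1..K}. real k * ratio_prod lamS muS k) = real n * (real n + 1) + (real n + 1) * rho"
  proof -
    have "(\<Sum>k\<in>{1..K}. real k * ratio_prod lamS muS k)
        = (\<Sum>k\<in>{1..K}. (if k \<le> n then 2 * real k else 0) + (if k = n + 1 then real k * rho else 0))"
      using Rsplit by (intro sum.cong) (auto simp: RP)
    also have "\<dots> = (\<Sum>k\<in>{1..K}. if k \<le> n then 2 * real k else 0) + (\<Sum>k\<in>{1..K}. if k = n + 1 then real k * rho else 0)"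
      by (simp add: sum.distrib)
    also have "(\<Sum>k\<in>{1..K}. if k \<le> n then 2 * real k else 0) = (\<Sum>k\<in>{1..n}. 2 * real k)"
      using sum_restrict_le[of n K "\<lambda>k. 2 * real k"] nK by simp
    also have "(\<Sum>k\<in>{1..K}. if k = n + 1 then real k * rho else 0) = (real n + 1) * rho"
      using nK by (simp add: sum.delta)
    finally show ?thesis by (simp only: gauss2)
  qed
  have pi0: "stat_pi0 K lamS muS = p"
  proof -
    have "1 + (2 * real n + rho) = 1 / p" using rho_eq by simp
    then show ?thesis unfolding stat_pi0_def using Ssum p_pos by simp
  qed
  have delay: "avg_delay l K lamS muS = (real kstar + 1) / (2 * l) * (1 - (Emax - 1) * (real kstar + 1))"
  proof -
    have "p * (real n * (real n + 1) + (real n + 1) * rho) = (real n + 1) * (p * (real n + rho))"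
      by (simp add: algebra_simps)
    also have "p * (real n + rho) = 1 - p * (real n + 1)"
    proof -
      have "rho = 1 / p - 1 - 2 * real n" using rho_eq by simp
      then have "p * rho = 1 - p - 2 * p * real n" using p_pos by (simp add: field_simps)
      then show ?thesis by (simp add: algebra_simps)
    qed
    finally have e: "p * (real n * (real n + 1) + (real n + 1) * rho) = (real n + 1) * (1 - p * (real n + 1))" .
    have "avg_delay l K lamS muS = 1 / (2 * l) * (p * (real n * (real n + 1) + (real n + 1) * rho))"
      unfolding avg_form pi0 Tsum by simp
    also have "\<dots> = 1 / (2 * l) * ((real n + 1) * (1 - p * (real n + 1)))" using e by simp
    finally show ?thesis using pstar_def p_def n_def by simp
  qed
  have muge: "\<forall>k\<in>{1..K}. muS k \<ge> l" using mubig by (simp add: muS_def)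
  have lamK: "lamS K = 0" using nK K_ge by (simp add: lamS_def n_def)
  have feas: "feasible1 l K Emax lamS muS"
    unfolding feasible1_def using muge lamK pi0 l_pos p_def pstar_def
    by (auto simp: lamS_def)
  have opt: "\<forall>lam mu. feasible1 l K Emax lam mu \<longrightarrow> avg_delay l K lamS muS \<le> avg_delay l K lam mu"
    using opt_bound[OF l_pos _ _ refl, of K] nK delay n_def by auto
  show ?thesis
    using feas muge lamK pi0 delay opt mubig p_def
    by (auto simp: gS_def fS_def enc_lam_def enc_mu_def lamS_def muS_def)
qed

end
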